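(* Consider optimal control problem OCP-2 (described in the context). The optimal control $u_*^2$ (given pointwise by maximization of the Hamiltonian along the optimal trajectory and adjoint function) is a continuous function on the interval $[0,T]$.
   Context: Parameters: $\beta_1,\beta_2,\gamma,\rho_1,\rho_2>0$; $\sigma_1,\sigma_2>0$ with $\sigma_1+\sigma_2=1$; $q\in[0,1]$; $0\le u_{\max}<1$; weights $\alpha_1,\alpha_2\ge0$, $\alpha_3>0$; horizon $T>0$; initial values $s_0,e_0,i_0,j_0>0$ with $s_0+e_0+i_0+j_0\le1$. Admissible controls: Lebesgue measurable $u:[0,T]\to[0,u_{\max}]$. State system: $s'=-sn^{-1}(\beta_1(1-u)i+\beta_2j)$, $e'=sn^{-1}(\beta_1(1-u)i+\beta_2j)-\gamma e$, $i'=\sigma_1\gamma e-\rho_1 i$, $j'=\sigma_2\gamma e-\rho_2 j$, $n'=-q\rho_2 j$, with $s(0)=s_0,e(0)=e_0,i(0)=i_0,j(0)=j_0,n(0)=1$. OCP-2 is the problem of minimizing $Q(u)=\alpha_1(e(T)+i(T)+j(T))+\alpha_2\int_0^T(e+i+j)\,dt+0.5\alpha_3\int_0^Tu^2\,dt$ over admissible controls. Hamiltonian: $H(s,e,i,j,n,\phi_1,\dots,\phi_5,u)=-sn^{-1}(\beta_1(1-u)i+\beta_2j)(\phi_1-\phi_2)-\gamma e(\phi_2-\sigma_1\phi_3-\sigma_2\phi_4)-\rho_1 i\phi_3-\rho_2 j(\phi_4+q\phi_5)-\alpha_2(e+i+j)-0.5\alpha_3u^2$. For an optimal control $u_*^2$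 with optimal trajectory $(s_*^2,e_*^2,i_*^2,j_*^2,n_*^2)$, the adjoint function $\phi_*=(\phi_1^*,\dots,\phi_5^* )$ of the Pontryagin maximum principle is a nontrivial solution of (with $s,i,j,n,u$ denoting the optimal ones) $\phi_1'=n^{-1}(\beta_1(1-u)i+\beta_2j)(\phi_1-\phi_2)$, $\phi_2'=\gamma(\phi_2-\sigma_1\phi_3-\sigma_2\phi_4)+\alpha_2$, $\phi_3'=\beta_1(1-u)sn^{-1}(\phi_1-\phi_2)+\rho_1\phi_3+\alpha_2$, $\phi_4'=\beta_2sn^{-1}(\phi_1-\phi_2)+\rho_2(\phi_4+q\phi_5)+\alpha_2$, $\phi_5'=-sn^{-2}(\beta_1(1-u)i+\beta_2j)(\phi_1-\phi_2)$, with $\phi_1(T)=0$, $\phi_2(T)=\phi_3(T)=\phi_4(T)=-\alpha_1$, $\phi_5(T)=0$, and $u_*^2(t)$ maximizes $H(s_*^2(t),e_*^2(t),i_*^2(t),j_*^2(t),n_*^2(t),\phi_*(t),u)$ over $u\in[0,u_{\max}]$. *)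

theory Defs
  imports "HOL-Analysis.Analysis"
begin

text \<open>Model parameters: b1 b2 (beta_1, beta_2), g (gamma), r1 r2 (rho_1, rho_2),
  sg1 sg2 (sigma_1, sigma_2), q.  Time functions are real \<Rightarrow> real; only their
  values on [0,T] matter.\<close>

definition admissible :: "real \<Rightarrow> real \<Rightarrow> (real \<Rightarrow> real) \<Rightarrow> bool" where
  "admissible umax T u \<longleftrightarrow> u measurable_on {0..T} \<and> (\<forall>t\<in>{0..T}. 0 \<le> u t \<and> u t \<le> umax)"

definition force :: "real \<Rightarrow> real \<Rightarrow> real \<Rightarrow> real \<Rightarrow> real \<Rightarrow> real \<Rightarrow> real \<Rightarrow> real" where
  "force b1 b2 s i j n u = s / n * (b1 * (1 - u) * i + b2 * j)"

text \<open>(s,e,i,j,n) is a (Caratheodory, i.e. absolutely continuous) solution of the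
  state system on [0,T] driven by the control u, written in integral form.\<close>
definition state_sol ::
  "real \<Rightarrow> real \<Rightarrow> real \<Rightarrow> real \<Rightarrow> real \<Rightarrow> real \<Rightarrow> real \<Rightarrow> real \<Rightarrow>
   real \<Rightarrow> real \<Rightarrow> real \<Rightarrow> real \<Rightarrow> real \<Rightarrow> (real \<Rightarrow> real) \<Rightarrow>
   (real \<Rightarrow> real) \<Rightarrow> (real \<Rightarrow> real) \<Rightarrow> (real \<Rightarrow> real) \<Rightarrow> (real \<Rightarrow> real) \<Rightarrow> (real \<Rightarrow> real) \<Rightarrow> bool" where
  "state_sol b1 b2 g r1 r2 sg1 sg2 q s0 e0 i0 j0 T u s e i j n \<longleftrightarrow>
     (\<lambda>t. force b1 b2 (s t) (i t) (j t) (n t) (u t)) integrable_on {0..T} \<and>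
     (\<lambda>t. e t) integrable_on {0..T} \<and> (\<lambda>t. i t) integrable_on {0..T} \<and>
     (\<lambda>t. j t) integrable_on {0..T} \<and>
     (\<forall>t\<in>{0..T}.
        s t = s0 + integral {0..t} (\<lambda>\<tau>. - force b1 b2 (s \<tau>) (i \<tau>) (j \<tau>) (n \<tau>) (u \<tau>)) \<and>
        e t = e0 + integral {0..t} (\<lambda>\<tau>. force b1 b2 (s \<tau>) (i \<tau>) (j \<tau>) (n \<tau>) (u \<tau>) - g * e \<tau>) \<and>
        i t = i0 + integral {0..t} (\<lambda>\<tau>. sg1 * g * e \<tau> - r1 * i \<tau>) \<and>
        j t = j0 + integral {0..t} (\<lambda>\<tau>. sg2 * g * e \<tau> - r2 * j \<tau>) \<and>
        n t = 1 + integral {0..t} (\<lambda>\<tau>. - q * r2 * j \<tau>))"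

definition cost ::
  "real \<Rightarrow> real \<Rightarrow> real \<Rightarrow> real \<Rightarrow> (real \<Rightarrow> real) \<Rightarrow>
   (real \<Rightarrow> real) \<Rightarrow> (real \<Rightarrow> real) \<Rightarrow> (real \<Rightarrow> real) \<Rightarrow> real" where
  "cost a1 a2 a3 T u e i j =
     a1 * (e T + i T + j T) + a2 * integral {0..T} (\<lambda>t. e t + i t + j t)
     + 0.5 * a3 * integral {0..T} (\<lambda>t. (u t)\<^sup>2)"

definition Ham ::
  "real \<Rightarrow> real \<Rightarrow> real \<Rightarrow> real \<Rightarrow> real \<Rightarrow> real \<Rightarrow> real \<Rightarrow> real \<Rightarrow> real \<Rightarrow> real \<Rightarrow>
   real \<Rightarrow> real \<Rightarrow> real \<Rightarrow> real \<Rightarrow> real \<Rightarrow>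
   real \<Rightarrow> real \<Rightarrow> real \<Rightarrow> real \<Rightarrow> real \<Rightarrow> real \<Rightarrow> real" where
  "Ham b1 b2 g r1 r2 sg1 sg2 q a2 a3 s e i j n p1 p2 p3 p4 p5 u =
     - s / n * (b1 * (1 - u) * i + b2 * j) * (p1 - p2)
     - g * e * (p2 - sg1 * p3 - sg2 * p4) - r1 * i * p3 - r2 * j * (p4 + q * p5)
     - a2 * (e + i + j) - 0.5 * a3 * u\<^sup>2"

definition adjoint_sol ::
  "real \<Rightarrow> real \<Rightarrow> real \<Rightarrow> real \<Rightarrow> real \<Rightarrow> real \<Rightarrow> real \<Rightarrow> real \<Rightarrow>
   real \<Rightarrow> real \<Rightarrow> real \<Rightarrow> (real \<Rightarrow> real) \<Rightarrow>
   (real \<Rightarrow> real) \<Rightarrow> (real \<Rightarrow> real) \<Rightarrow> (real \<Rightarrow> real) \<Rightarrow> (real \<Rightarrow> real) \<Rightarrow>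
   (real \<Rightarrow> real) \<Rightarrow> (real \<Rightarrow> real) \<Rightarrow> (real \<Rightarrow> real) \<Rightarrow> (real \<Rightarrow> real) \<Rightarrow> (real \<Rightarrow> real) \<Rightarrow> bool" where
  "adjoint_sol b1 b2 g r1 r2 sg1 sg2 q a1 a2 T u s i j n p1 p2 p3 p4 p5 \<longleftrightarrow>
     (let d1 = (\<lambda>t. (b1 * (1 - u t) * i t + b2 * j t) / n t * (p1 t - p2 t));
          d2 = (\<lambda>t. g * (p2 t - sg1 * p3 t - sg2 * p4 t) + a2);
          d3 = (\<lambda>t. b1 * (1 - u t) * s t / n t * (p1 t - p2 t) + r1 * p3 t + a2);
          d4 = (\<lambda>t. b2 * s t / n t * (p1 t - p2 t) + r2 * (p4 t + q * p5 t) + a2);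
          d5 = (\<lambda>t. - s t / (n t)\<^sup>2 * (b1 * (1 - u t) * i t + b2 * j t) * (p1 t - p2 t))
      in d1 integrable_on {0..T} \<and> d2 integrable_on {0..T} \<and> d3 integrable_on {0..T} \<and>
         d4 integrable_on {0..T} \<and> d5 integrable_on {0..T} \<and>
         (\<forall>t\<in>{0..T}.
            p1 t = 0 - integral {t..T} d1 \<and>
            p2 t = - a1 - integral {t..T} d2 \<and>
            p3 t = - a1 - integral {t..T} d3 \<and>
            p4 t = - a1 - integral {t..T} d4 \<and>
            p5 t = 0 - integral {t..T} d5))"

end

theory Submission
  imports Defs
begin

lemma int_split:
  fixes f :: "real \<Rightarrow> real"
  assumes "f integrable_on {0..T}" "0 \<le> t" "t \<le> b" "b \<le> T"
  shows "integral {0..b} f - integral {0..t} f = integral {t..b} f"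
proof -
  have "f integrable_on {0..b}" using assms by (intro integrable_on_subinterval[OF assms(1)]) auto
  from Henstock_Kurzweil_Integration.integral_combine[OF assms(2) assms(3) this] show ?thesis by simp
qed

lemma step_ineq:
  fixes f y :: "real \<Rightarrow> real"
  assumes fi: "f integrable_on {0..T}" and yc: "continuous_on {0..T} y"
    and eq: "\<forall>t\<in>{0..T}. y t = y0 + integral {0..t} f"
    and t: "0 \<le> t" "t \<le> b" "b \<le> T"
    and le: "\<forall>x\<in>{t..b}. f x \<ge> - K * y x"
  shows "y b \<ge> y t - K * integral {t..b} y"
proof -
  have "y b - y t = integral {t..b} f" using eq t int_split[OF fi t] by auto
  have fi2: "f integrable_on {t..b}" using t by (intro integrable_on_subinterval[OF fi]) auto
  have yi: "y integrable_on {t..b}" using t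
    by (intro integrable_continuous_interval continuous_on_subset[OF yc]) auto
  have "integral {t..b} (\<lambda>x. - K * y x) \<le> integral {t..b} f"
    by (rule integral_le) (use le fi2 yi integrable_neg[OF integrable_on_mult_right[OF yi, of K]] in auto)
  then show ?thesis using \<open>y b - y t = integral {t..b} f\<close> by simp
qed

lemma decay:
  fixes y :: "real \<Rightarrow> real"
  assumes yc: "continuous_on {a..b} y" and ab: "a < b" and ya: "y a > 0"
    and nn: "\<forall>t\<in>{a..b}. y t \<ge> 0" and K: "K \<ge> 0" and small: "(b - a) * K \<le> 1/2"
    and ineq: "\<forall>t\<in>{a..b}. y b \<ge> y t - K * integral {t..b} y"
  shows "y b > 0"
proof -
  obtain t1 where t1: "t1 \<in> {a..b}" "\<forall>x\<in>{a..b}. y x \<le> y t1"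
    using continuous_attains_sup[OF compact_Icc _ yc] ab by fastforce
  have yi: "y integrable_on {t1..b}" using t1
    by (intro integrable_continuous_interval continuous_on_subset[OF yc]) auto
  have "integral {t1..b} y \<le> integral {t1..b} (\<lambda>x. y t1)"
    by (rule integral_le) (use yi t1 in auto)
  also have "\<dots> = (b - t1) * y t1" using t1 by simp
  finally have I: "integral {t1..b} y \<le> (b - t1) * y t1" .
  have M1: "y t1 \<ge> y a" using t1 ab by auto
  have M: "y t1 \<ge> y a" "y t1 > 0" using M1 ya by auto
  have "K * integral {t1..b} y \<le> K * ((b - t1) * y t1)" using I K by (rule mult_left_mono)
  also have "\<dots> = ((b - t1) * K) * y t1" by simp
  also have "\<dots> \<le> ((b - a) * K) * y t1" using t1 K M by (intro mult_right_mono mult_right_mono) auto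
  also have "\<dots> \<le> (1/2) * y t1" using small M by (intro mult_right_mono) auto
  finally have "K * integral {t1..b} y \<le> y t1 / 2" by simp
  with ineq t1 M show ?thesis by fastforce
qed

lemma pick:
  fixes tau K d :: real
  assumes "0 < tau" "K \<ge> 0" "d > 0"
  shows "\<exists>a. 0 \<le> a \<and> a < tau \<and> (tau - a) * K \<le> 1/2 \<and> tau - a < d"
proof -
  define h where "h = min (d/2) (1/(2*K+2))"
  have h: "h > 0" "h < d" "h \<le> 1/(2*K+2)" using assms by (auto simp: h_def)
  have "h * K \<le> K/(2*K+2)" using mult_right_mono[OF h(3) assms(2)] by simp
  also have "\<dots> \<le> 1/2" using assms by (simp add: field_simps)
  finally have hK: "h * K \<le> 1/2" .
  show ?thesis
  proof (cases "tau - h \<ge> 0")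
    case True then show ?thesis using h hK by (intro exI[of _ "tau - h"]) auto
  next
    case False
    then have "tau < h" by simp
    have "tau * K \<le> h * K" using \<open>tau < h\<close> assms by (intro mult_right_mono) auto
    then show ?thesis using h hK False assms by (intro exI[of _ 0]) auto
  qed
qed

lemma nonneg_end:
  fixes y :: "real \<Rightarrow> real"
  assumes yc: "continuous_on {0..T} y" and tau: "0 < tau" "tau \<le> T"
    and pos: "\<forall>x\<in>{0..<tau}. y x > 0"
  shows "y tau \<ge> 0"
proof -
  have cl: "closure {0..<tau} = {0..tau}" using tau by simp
  have "continuous_on (closure {0..<tau}) y" unfolding cl
    using tau by (intro continuous_on_subset[OF yc]) auto
  from continuous_ge_on_closure[OF this, of tau 0] pos tau cl show ?thesis
    by (metis atLeastAtMost_iff less_eq_real_def order_refl)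
qed

lemma pos_at:
  fixes f y :: "real \<Rightarrow> real"
  assumes fi: "f integrable_on {0..T}" and yc: "continuous_on {0..T} y"
    and eq: "\<forall>t\<in>{0..T}. y t = y0 + integral {0..t} f"
    and tau: "0 < tau" "tau \<le> T" and K: "K \<ge> 0" and d: "d > 0"
    and pos: "\<forall>x\<in>{0..<tau}. y x > 0"
    and le: "\<forall>x\<in>{0..tau}. tau - x < d \<longrightarrow> f x \<ge> - K * y x"
  shows "y tau > 0"
proof -
  have y0: "y tau \<ge> 0" by (rule nonneg_end[OF yc tau pos])
  obtain a where a: "0 \<le> a" "a < tau" "(tau - a) * K \<le> 1/2" "tau - a < d"
    using pick[OF tau(1) K d] by blast
  show ?thesis
  proof (rule decay[OF _ a(2) _ _ K a(3)])
    show "continuous_on {a..tau} y" using a tau by (intro continuous_on_subset[OF yc]) auto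
    show "y a > 0" using pos a by auto
    show "\<forall>t\<in>{a..tau}. 0 \<le> y t" using pos a y0 by (auto simp: less_eq_real_def)
    show "\<forall>t\<in>{a..tau}. y t - K * integral {t..tau} y \<le> y tau"
    proof
      fix t assume t: "t \<in> {a..tau}"
      show "y t - K * integral {t..tau} y \<le> y tau"
        by (rule step_ineq[OF fi yc eq]) (use t a tau le in auto)
    qed
  qed
qed

lemma cont_from_eq:
  fixes f y :: "real \<Rightarrow> real"
  assumes fi: "f integrable_on {0..T}"
    and eq: "\<forall>t\<in>{0..T}. y t = y0 + integral {0..t} f"
  shows "continuous_on {0..T} y"
proof -
  have "continuous_on {0..T} (\<lambda>t. y0 + integral {0..t} f)"
    by (intro continuous_on_add continuous_on_const indefinite_integral_continuous_1[OF fi])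
  then show ?thesis by (rule continuous_on_eq) (use eq in auto)
qed

lemma clamp:
  fixes c a3 umax u :: real
  assumes a3: "a3 > 0" and um: "0 \<le> umax" and u: "0 \<le> u" "u \<le> umax"
    and mx: "\<forall>w\<in>{0..umax}. w * c - 0.5 * a3 * w^2 \<le> u * c - 0.5 * a3 * u^2"
  shows "u = max 0 (min umax (c / a3))"
proof -
  define w0 where "w0 = max 0 (min umax (c / a3))"
  have w0: "w0 \<in> {0..umax}" using um by (auto simp: w0_def)
  have vi: "(u - w0) * (c - a3 * w0) \<le> 0"
  proof (cases "c / a3 \<le> 0")
    case True
    have "w0 = 0" using True um unfolding w0_def by (simp add: max_def min_def)
    moreover have "c \<le> 0" using True a3 by (simp add: divide_le_0_iff)
    ultimately show ?thesis using u by (simp add: mult_nonneg_nonpos)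
  next
    case False
    show ?thesis
    proof (cases "c / a3 \<ge> umax")
      case True
      then have "w0 = umax" "c \<ge> a3 * umax" using um a3 by (auto simp: w0_def pos_le_divide_eq mult.commute)
      then show ?thesis using u by (simp add: mult_nonpos_nonneg)
    next
      case False2: False
      then have "w0 = c / a3" using False by (auto simp: w0_def)
      then show ?thesis using a3 by simp
    qed
  qed
  have id: "u * c - 0.5 * a3 * u^2 - (w0 * c - 0.5 * a3 * w0^2)
      = (u - w0) * (c - a3 * w0) - 0.5 * a3 * (u - w0)^2"
    by (simp add: algebra_simps power2_eq_square)
  have "0.5 * a3 * (u - w0)^2 \<le> 0" using mx w0 id vi by force
  then have "(u - w0)^2 \<le> 0" using a3
    by (metis mult_pos_pos not_le zero_less_power2 mult_le_0_iff less_numeral_extra(1) divide_pos_pos zero_less_numeral power2_less_eq_zero_iff mult_nonneg_nonneg zero_le_power2 order_refl linorder_not_less not_less_iff_gr_or_eq)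
  then show ?thesis by (simp add: w0_def)
qed

theorem lemma7:
  fixes b1 b2 g r1 r2 sg1 sg2 q umax a1 a2 a3 T s0 e0 i0 j0 :: real
    and u s e i j n p1 p2 p3 p4 p5 :: "real \<Rightarrow> real"
  assumes params: "b1 > 0" "b2 > 0" "g > 0" "r1 > 0" "r2 > 0"
    and sigma: "sg1 > 0" "sg2 > 0" "sg1 + sg2 = 1"
    and qrange: "0 \<le> q" "q \<le> 1"
    and umax: "0 \<le> umax" "umax < 1"
    and weights: "a1 \<ge> 0" "a2 \<ge> 0" "a3 > 0"
    and horizon: "T > 0"
    and init: "s0 > 0" "e0 > 0" "i0 > 0" "j0 > 0" "s0 + e0 + i0 + j0 \<le> 1"
    and adm: "admissible umax T u"
    and traj: "state_sol b1 b2 g r1 r2 sg1 sg2 q s0 e0 i0 j0 T u s e i j n"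
    and optimal: "\<And>v s' e' i' j' n'. admissible umax T v \<Longrightarrow>
                   state_sol b1 b2 g r1 r2 sg1 sg2 q s0 e0 i0 j0 T v s' e' i' j' n' \<Longrightarrow>
                   cost a1 a2 a3 T u e i j \<le> cost a1 a2 a3 T v e' i' j'"
    and adj: "adjoint_sol b1 b2 g r1 r2 sg1 sg2 q a1 a2 T u s i j n p1 p2 p3 p4 p5"
    and nontriv: "\<exists>t\<in>{0..T}. (p1 t, p2 t, p3 t, p4 t, p5 t) \<noteq> (0, 0, 0, 0, 0)"
    and maxH: "\<And>t w. t \<in> {0..T} \<Longrightarrow> w \<in> {0..umax} \<Longrightarrow>
                 Ham b1 b2 g r1 r2 sg1 sg2 q a2 a3 (s t) (e t) (i t) (j t) (n t)
                     (p1 t) (p2 t) (p3 t) (p4 t) (p5 t) w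
               \<le> Ham b1 b2 g r1 r2 sg1 sg2 q a2 a3 (s t) (e t) (i t) (j t) (n t)
                     (p1 t) (p2 t) (p3 t) (p4 t) (p5 t) (u t)"
  shows "continuous_on {0..T} u"
proof -
  define F where "F = (\<lambda>\<tau>. force b1 b2 (s \<tau>) (i \<tau>) (j \<tau>) (n \<tau>) (u \<tau>))"
  have intF: "F integrable_on {0..T}" and intE: "e integrable_on {0..T}"
    and intI: "i integrable_on {0..T}" and intJ: "j integrable_on {0..T}"
    using traj unfolding state_sol_def F_def by auto
  have eqS: "\<forall>t\<in>{0..T}. s t = s0 + integral {0..t} (\<lambda>\<tau>. - F \<tau>)"
    and eqE: "\<forall>t\<in>{0..T}. e t = e0 + integral {0..t} (\<lambda>\<tau>. F \<tau> - g * e \<tau>)"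
    and eqI: "\<forall>t\<in>{0..T}. i t = i0 + integral {0..t} (\<lambda>\<tau>. sg1 * g * e \<tau> - r1 * i \<tau>)"
    and eqJ: "\<forall>t\<in>{0..T}. j t = j0 + integral {0..t} (\<lambda>\<tau>. sg2 * g * e \<tau> - r2 * j \<tau>)"
    and eqN: "\<forall>t\<in>{0..T}. n t = 1 + integral {0..t} (\<lambda>\<tau>. - q * r2 * j \<tau>)"
    using traj unfolding state_sol_def F_def by auto
  have iS: "(\<lambda>\<tau>. - F \<tau>) integrable_on {0..T}" by (rule integrable_neg[OF intF])
  have iE: "(\<lambda>\<tau>. F \<tau> - g * e \<tau>) integrable_on {0..T}"
    by (intro integrable_diff intF integrable_on_mult_right intE)
  have iI: "(\<lambda>\<tau>. sg1 * g * e \<tau> - r1 * i \<tau>) integrable_on {0..T}"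
    by (intro integrable_diff integrable_on_mult_right intE intI)
  have iJ: "(\<lambda>\<tau>. sg2 * g * e \<tau> - r2 * j \<tau>) integrable_on {0..T}"
    by (intro integrable_diff integrable_on_mult_right intE intJ)
  have iN: "(\<lambda>\<tau>. - q * r2 * j \<tau>) integrable_on {0..T}"
    by (intro integrable_on_mult_right intJ)
  have cS: "continuous_on {0..T} s" by (rule cont_from_eq[OF iS eqS])
  have cE: "continuous_on {0..T} e" by (rule cont_from_eq[OF iE eqE])
  have cI: "continuous_on {0..T} i" by (rule cont_from_eq[OF iI eqI])
  have cJ: "continuous_on {0..T} j" by (rule cont_from_eq[OF iJ eqJ])
  have cN: "continuous_on {0..T} n" by (rule cont_from_eq[OF iN eqN])
  have uB: "\<forall>x\<in>{0..T}. 0 \<le> u x \<and> u x \<le> umax" using adm unfolding admissible_def by auto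
  have F0: "F x \<ge> 0" if "s x \<ge> 0" "i x \<ge> 0" "j x \<ge> 0" "n x \<ge> 0" "x \<in> {0..T}" for x
  proof -
    have "1 - u x \<ge> 0" using uB that umax by force
    then show ?thesis unfolding F_def force_def using that params
      by (intro mult_nonneg_nonneg divide_nonneg_nonneg add_nonneg_nonneg) auto
  qed
  define P where "P t \<longleftrightarrow> 0 < s t \<and> 0 < e t \<and> 0 < i t \<and> 0 < j t \<and> 0 < n t" for t
  define m where "m t = min (s t) (min (e t) (min (i t) (min (j t) (n t))))" for t
  have Pm: "P t \<longleftrightarrow> m t > 0" for t unfolding P_def m_def by auto
  have P0: "P 0" using eqS eqE eqI eqJ eqN horizon init unfolding P_def by auto
  have allP: "\<forall>t\<in>{0..T}. P t"
  proof (rule ccontr)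
    assume nP: "\<not> (\<forall>t\<in>{0..T}. P t)"
    define Z where "Z = {0..T} \<inter> m -` {..0}"
    have Zne: "Z \<noteq> {}" using nP Pm unfolding Z_def by force
    have cm: "continuous_on {0..T} m" unfolding m_def
      by (intro continuous_on_min cS cE cI cJ cN)
    have clZ: "closed Z" unfolding Z_def by (intro continuous_closed_preimage cm) auto
    have bdd: "bdd_below Z" unfolding Z_def by (rule bdd_belowI[of _ 0]) auto
    define tau where "tau = Inf Z"
    have tZ: "tau \<in> Z" unfolding tau_def by (rule closed_contains_Inf[OF Zne bdd clZ])
    have tT: "0 \<le> tau" "tau \<le> T" "\<not> P tau" using tZ Pm unfolding Z_def by auto
    have tpos: "0 < tau" using tT P0 by (cases "tau = 0") auto
    have before: "\<forall>x\<in>{0..<tau}. P x"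
    proof
      fix x assume x: "x \<in> {0..<tau}"
      show "P x"
      proof (rule ccontr)
        assume "\<not> P x"
        then have "x \<in> Z" using x tT Pm unfolding Z_def by auto
        then have "tau \<le> x" unfolding tau_def by (rule cInf_lower[OF _ bdd])
        then show False using x by auto
      qed
    qed
    have bS: "\<forall>x\<in>{0..<tau}. s x > 0" and bE: "\<forall>x\<in>{0..<tau}. e x > 0"
      and bI: "\<forall>x\<in>{0..<tau}. i x > 0" and bJ: "\<forall>x\<in>{0..<tau}. j x > 0"
      and bN: "\<forall>x\<in>{0..<tau}. n x > 0" using before unfolding P_def by auto
    have tau': "0 < tau" "tau \<le> T" using tpos tT by auto
    have nS: "s tau \<ge> 0" by (rule nonneg_end[OF cS tau' bS])
    have nE: "e tau \<ge> 0" by (rule nonneg_end[OF cE tau' bE])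
    have nI: "i tau \<ge> 0" by (rule nonneg_end[OF cI tau' bI])
    have nJ: "j tau \<ge> 0" by (rule nonneg_end[OF cJ tau' bJ])
    have nN: "n tau \<ge> 0" by (rule nonneg_end[OF cN tau' bN])
    have nn: "s x \<ge> 0 \<and> e x \<ge> 0 \<and> i x \<ge> 0 \<and> j x \<ge> 0 \<and> n x \<ge> 0" if "x \<in> {0..tau}" for x
    proof (cases "x = tau")
      case True then show ?thesis using nS nE nI nJ nN by simp
    next
      case False then have "x \<in> {0..<tau}" using that by auto
      then show ?thesis using bS bE bI bJ bN by (auto simp: less_eq_real_def)
    qed
    have pI: "i tau > 0"
    proof (rule pos_at[OF iI cI eqI tau' _ _ bI])
      show "\<forall>x\<in>{0..tau}. tau - x < 1 \<longrightarrow> - r1 * i x \<le> sg1 * g * e x - r1 * i x"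
        using nn sigma params by auto
    qed (use params in auto)
    have pE: "e tau > 0"
    proof (rule pos_at[OF iE cE eqE tau' _ _ bE])
      show "\<forall>x\<in>{0..tau}. tau - x < 1 \<longrightarrow> - g * e x \<le> F x - g * e x"
        using nn F0 tau' by auto
    qed (use params in auto)
    have pJ: "j tau > 0"
    proof (rule pos_at[OF iJ cJ eqJ tau' _ _ bJ])
      show "\<forall>x\<in>{0..tau}. tau - x < 1 \<longrightarrow> - r2 * j x \<le> sg2 * g * e x - r2 * j x"
        using nn sigma params by auto
    qed (use params in auto)
    have pN: "n tau > 0"
    proof -
      have sub: "{0..tau} \<subseteq> {0..T}" using tau' by auto
      have iF': "F integrable_on {0..tau}" and iE': "e integrable_on {0..tau}"
        and iI': "i integrable_on {0..tau}" and iJ': "j integrable_on {0..tau}"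
        using integrable_on_subinterval[OF intF sub] integrable_on_subinterval[OF intE sub]
          integrable_on_subinterval[OF intI sub] integrable_on_subinterval[OF intJ sub] by auto
      define IF where "IF = integral {0..tau} F"
      define IE where "IE = integral {0..tau} e"
      define II where "II = integral {0..tau} i"
      define IJ where "IJ = integral {0..tau} j"
      have tt: "tau \<in> {0..T}" using tau' by auto
      have s1: "s tau = s0 - IF" using eqS tt by (simp add: IF_def)
      have e1: "e tau = e0 + IF - g * IE" using eqE tt
        by (simp add: IF_def IE_def integral_diff[OF iF' integrable_on_mult_right[OF iE']])
      have i1: "i tau = i0 + sg1 * g * IE - r1 * II" using eqI tt
        by (simp add: IE_def II_def integral_diff[OF integrable_on_mult_right[OF iE'] integrable_on_mult_right[OF iI']])
      have j1: "j tau = j0 + sg2 * g * IE - r2 * IJ" using eqJ tt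
        by (simp add: IE_def IJ_def integral_diff[OF integrable_on_mult_right[OF iE'] integrable_on_mult_right[OF iJ']])
      have n1: "n tau = 1 - q * r2 * IJ" using eqN tt by (simp add: IJ_def)
      have sg: "sg1 * g * IE + sg2 * g * IE = g * IE" using sigma(3)
        by (metis distrib_right mult_1)
      have II0: "II \<ge> 0" unfolding II_def by (rule integral_nonneg[OF iI']) (use nn in auto)
      have key: "n tau = 1 - q * (s0 + e0 + i0 + j0) + q * (s tau + e tau + i tau + j tau) + q * r1 * II"
      proof -
        have S: "s tau + e tau + i tau + j tau = (s0 + e0 + i0 + j0) - r1 * II - r2 * IJ"
          using s1 e1 i1 j1 sg by linarith
        have "q * (s tau + e tau + i tau + j tau) = q * (s0 + e0 + i0 + j0) - q * r1 * II - q * r2 * IJ"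
          unfolding S by (simp add: algebra_simps)
        then show ?thesis using n1 by linarith
      qed
      have a: "q * (s0 + e0 + i0 + j0) \<le> q" using init qrange mult_left_mono[of "s0 + e0 + i0 + j0" 1 q] by simp
      have b: "q * (s tau + e tau + i tau + j tau) \<ge> q * i tau"
        using nS nE nJ qrange by (intro mult_left_mono) auto
      have c: "q * r1 * II \<ge> 0" using II0 qrange params by simp
      have "1 - q + q * i tau > 0"
      proof (cases "q = 1")
        case True then show ?thesis using pI by simp
      next
        case False then show ?thesis using qrange pI by (simp add: add_pos_nonneg)
      qed
      then show ?thesis using key a b c by linarith
    qed
    have pS: "s tau > 0"
    proof -
      have "continuous_on {0..T} n" by (rule cN)
      then obtain d where d: "d > 0" "\<forall>x\<in>{0..T}. dist x tau < d \<longrightarrow> dist (n x) (n tau) < n tau / 2"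
        using tau' pN unfolding continuous_on_iff by (metis atLeastAtMost_iff half_gt_zero less_eq_real_def)
      obtain xi where xi: "\<forall>x\<in>{0..T}. i x \<le> i xi"
        using continuous_attains_sup[OF compact_Icc _ cI] horizon by fastforce
      obtain xj where xj: "\<forall>x\<in>{0..T}. j x \<le> j xj"
        using continuous_attains_sup[OF compact_Icc _ cJ] horizon by fastforce
      define Wb where "Wb = b1 * i xi + b2 * j xj"
      define R where "R = Wb / (n tau / 2)"
      have Wb0: "Wb \<ge> 0" unfolding Wb_def using xi xj nn[of 0] tau' params
        by (smt (verit, del_insts) atLeastAtMost_iff mult_nonneg_nonneg)
      have R0: "R \<ge> 0" unfolding R_def using Wb0 pN by simp
      show ?thesis
      proof (rule pos_at[OF iS cS eqS tau' R0 d(1) bS])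
        show "\<forall>x\<in>{0..tau}. tau - x < d \<longrightarrow> - R * s x \<le> - F x"
        proof (intro ballI impI)
          fix x assume x: "x \<in> {0..tau}" and xd: "tau - x < d"
          have xT: "x \<in> {0..T}" using x tau' by auto
          have "dist (n x) (n tau) < n tau / 2" using d(2) xT x xd by (auto simp: dist_real_def)
          then have nx: "n x \<ge> n tau / 2" unfolding dist_real_def by linarith
          have nnx: "s x \<ge> 0" "i x \<ge> 0" "j x \<ge> 0" using nn x by auto
          have "0 \<le> u x" "u x \<le> umax" using uB xT by auto
          then have u1: "0 \<le> 1 - u x" "1 - u x \<le> 1" using umax by auto
          define W where "W = b1 * (1 - u x) * i x + b2 * j x"
          have W0: "W \<ge> 0" unfolding W_def using u1 nnx params by simp
          have "b1 * (1 - u x) * i x \<le> b1 * i x"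
            using u1 nnx params mult_right_mono[of "b1 * (1 - u x)" b1 "i x"] by simp
          moreover have "b1 * i x \<le> b1 * i xi" using xi xT params by simp
          moreover have "b2 * j x \<le> b2 * j xj" using xj xT params by simp
          ultimately have WW: "W \<le> Wb" unfolding W_def Wb_def by linarith
          have sn: "s x / n x \<le> s x / (n tau / 2)"
            using nx nnx pN by (intro divide_left_mono) auto
          have "F x = s x / n x * W" unfolding F_def force_def W_def by simp
          also have "\<dots> \<le> s x / (n tau / 2) * W" using sn W0 by (rule mult_right_mono)
          also have "\<dots> \<le> s x / (n tau / 2) * Wb" using WW nnx pN by (intro mult_left_mono) auto
          also have "\<dots> = R * s x" unfolding R_def by simp
          finally show "- R * s x \<le> - F x" by simp
        qed
      qed
    qed
    have "P tau" unfolding P_def using pS pE pI pJ pN by auto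
    then show False using tT by simp
  qed
  have npos: "\<forall>t\<in>{0..T}. n t > 0" using allP unfolding P_def by auto
  obtain d1 d2 where id1: "d1 integrable_on {0..T}" and id2: "d2 integrable_on {0..T}"
    and ep1: "\<forall>t\<in>{0..T}. p1 t = 0 - integral {t..T} d1"
    and ep2: "\<forall>t\<in>{0..T}. p2 t = - a1 - integral {t..T} d2"
    using adj unfolding adjoint_sol_def Let_def by blast
  have cp1: "continuous_on {0..T} p1"
  proof -
    have "continuous_on {0..T} (\<lambda>t. 0 - integral {t..T} d1)"
      by (intro continuous_on_diff continuous_on_const indefinite_integral_continuous_1'[OF id1])
    then show ?thesis by (rule continuous_on_eq) (use ep1 in auto)
  qed
  have cp2: "continuous_on {0..T} p2"
  proof -
    have "continuous_on {0..T} (\<lambda>t. - a1 - integral {t..T} d2)"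
      by (intro continuous_on_diff continuous_on_const indefinite_integral_continuous_1'[OF id2])
    then show ?thesis by (rule continuous_on_eq) (use ep2 in auto)
  qed
  define c where "c t = s t / n t * b1 * i t * (p1 t - p2 t)" for t
  have cc: "continuous_on {0..T} c" unfolding c_def
    using npos by (intro continuous_intros cS cN cI cp1 cp2) auto
  have ueq: "u t = max 0 (min umax (c t / a3))" if t: "t \<in> {0..T}" for t
  proof (rule clamp[OF weights(3) umax(1)])
    show "0 \<le> u t" "u t \<le> umax" using uB t by auto
    have hid: "Ham b1 b2 g r1 r2 sg1 sg2 q a2 a3 (s t) (e t) (i t) (j t) (n t)
                     (p1 t) (p2 t) (p3 t) (p4 t) (p5 t) w
       = Ham b1 b2 g r1 r2 sg1 sg2 q a2 a3 (s t) (e t) (i t) (j t) (n t)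
                     (p1 t) (p2 t) (p3 t) (p4 t) (p5 t) 0 + (w * c t - 0.5 * a3 * w^2)" for w
      unfolding Ham_def c_def by (simp add: algebra_simps)
    show "\<forall>w\<in>{0..umax}. w * c t - 0.5 * a3 * w\<^sup>2 \<le> u t * c t - 0.5 * a3 * (u t)\<^sup>2"
      using maxH[OF t] hid by (metis add_le_cancel_left)
  qed
  have "continuous_on {0..T} (\<lambda>t. max 0 (min umax (c t / a3)))"
    using weights(3) by (intro continuous_intros cc) auto
  then show ?thesis by (rule continuous_on_eq) (use ueq in auto)
qed

end
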